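(* Let $A,B\in M_n(\mathbb{R}_+)$ be nilpotent such that both $A$ and $B$ annihilate $AB$ and $BA$, i.e. $A(AB)=A(BA)=B(AB)=B(BA)=0$. Then $A$ and $B$ are simultaneously triangularizable.
   Context: Max algebra: $\mathbb{R}_+$ the nonnegative reals with $a\oplus b=\max\{a,b\}$ and ordinary multiplication; for $A,B\in M_n(\mathbb{R}_+)$, $(AB)_{ij}=\max_k a_{ik}b_{kj}$. A matrix is nilpotent if some power (max-product) is $0$. $GL_n(\mathbb{R}_+)$ is the set of matrices invertible under this product (the generalized permutation matrices). $A,B$ are simultaneously triangularizable if there is one $P\in GL_n(\mathbb{R}_+)$ with both $P^{-1}AP$ and $P^{-1}BP$ upper triangular. *)

theory Defs
  imports Main "HOL.Real"
begin

text \<open>n x n matrices over the max algebra R_+, represented as functions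
  nat => nat => real which are nonnegative and vanish outside the index
  range {0..<n}.\<close>

definition mp_mats :: "nat \<Rightarrow> (nat \<Rightarrow> nat \<Rightarrow> real) set" where
  "mp_mats n = {A. (\<forall>i j. 0 \<le> A i j) \<and> (\<forall>i j. (n \<le> i \<or> n \<le> j) \<longrightarrow> A i j = 0)}"

text \<open>Max-product: (AB)_ij = max_k a_ik b_kj (k < n); the 0 inside the Max is
  harmless for nonnegative entries and makes the set nonempty.\<close>
definition mp_mult :: "nat \<Rightarrow> (nat \<Rightarrow> nat \<Rightarrow> real) \<Rightarrow> (nat \<Rightarrow> nat \<Rightarrow> real) \<Rightarrow> (nat \<Rightarrow> nat \<Rightarrow> real)" where
  "mp_mult n A B = (\<lambda>i j. if i < n \<and> j < n
      then Max (insert 0 ((\<lambda>k. A i k * B k j) ` {..<n})) else 0)"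

definition mp_zero :: "nat \<Rightarrow> nat \<Rightarrow> real" where
  "mp_zero = (\<lambda>i j. 0)"

definition mp_one :: "nat \<Rightarrow> nat \<Rightarrow> nat \<Rightarrow> real" where
  "mp_one n = (\<lambda>i j. if i = j \<and> i < n then 1 else 0)"

fun mp_pow :: "nat \<Rightarrow> (nat \<Rightarrow> nat \<Rightarrow> real) \<Rightarrow> nat \<Rightarrow> (nat \<Rightarrow> nat \<Rightarrow> real)" where
  "mp_pow n A 0 = mp_one n"
| "mp_pow n A (Suc k) = mp_mult n A (mp_pow n A k)"

definition mp_nilpotent :: "nat \<Rightarrow> (nat \<Rightarrow> nat \<Rightarrow> real) \<Rightarrow> bool" where
  "mp_nilpotent n A \<longleftrightarrow> (\<exists>k. mp_pow n A k = mp_zero)"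

definition mp_inverse :: "nat \<Rightarrow> (nat \<Rightarrow> nat \<Rightarrow> real) \<Rightarrow> (nat \<Rightarrow> nat \<Rightarrow> real) \<Rightarrow> bool" where
  "mp_inverse n P Q \<longleftrightarrow> P \<in> mp_mats n \<and> Q \<in> mp_mats n \<and>
     mp_mult n P Q = mp_one n \<and> mp_mult n Q P = mp_one n"

definition upper_triangular :: "(nat \<Rightarrow> nat \<Rightarrow> real) \<Rightarrow> bool" where
  "upper_triangular M \<longleftrightarrow> (\<forall>i j. j < i \<longrightarrow> M i j = 0)"

definition mp_simul_triangularizable :: "nat \<Rightarrow> (nat \<Rightarrow> nat \<Rightarrow> real) \<Rightarrow> (nat \<Rightarrow> nat \<Rightarrow> real) \<Rightarrow> bool" where
  "mp_simul_triangularizable n A B \<longleftrightarrow>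
     (\<exists>P Q. mp_inverse n P Q \<and>
        upper_triangular (mp_mult n Q (mp_mult n A P)) \<and>
        upper_triangular (mp_mult n Q (mp_mult n B P)))"

end

theory Submission
  imports Defs
begin

lemma mp_mult_nonneg: "0 \<le> mp_mult n X Y i j"
proof -
  have "finite (insert (0::real) ((\<lambda>k. X i k * Y k j) ` {..<n}))" by simp
  then have "0 \<le> Max (insert (0::real) ((\<lambda>k. X i k * Y k j) ` {..<n}))" by (rule Max_ge) simp
  then show ?thesis unfolding mp_mult_def by simp
qed

lemma mp_mult_pos:
  assumes "\<forall>i j. 0 \<le> X i j" "\<forall>i j. 0 \<le> Y i j" "i < n" "j < n"
  shows "0 < mp_mult n X Y i j \<longleftrightarrow> (\<exists>k<n. 0 < X i k \<and> 0 < Y k j)"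
proof -
  have "0 < mp_mult n X Y i j \<longleftrightarrow> (\<exists>a\<in>insert 0 ((\<lambda>k. X i k * Y k j) ` {..<n}). 0 < a)"
    using assms(3,4) unfolding mp_mult_def by (simp add: Max_gr_iff)
  also have "\<dots> \<longleftrightarrow> (\<exists>k<n. 0 < X i k * Y k j)" by auto
  also have "\<dots> \<longleftrightarrow> (\<exists>k<n. 0 < X i k \<and> 0 < Y k j)"
  proof -
    have "0 < X i k * Y k j \<longleftrightarrow> 0 < X i k \<and> 0 < Y k j" for k
    proof -
      have a: "0 \<le> X i k" "0 \<le> Y k j" using assms(1,2) by blast+
      then show ?thesis by (auto simp: zero_less_mult_iff)
    qed
    then show ?thesis by simp
  qed
  finally show ?thesis .
qed

lemma mats_nonneg: "X \<in> mp_mats n \<Longrightarrow> 0 \<le> X i j"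
  unfolding mp_mats_def by auto

lemma mats_pos_bound: "X \<in> mp_mats n \<Longrightarrow> 0 < X i j \<Longrightarrow> i < n \<and> j < n"
proof -
  assume X: "X \<in> mp_mats n" and p: "0 < X i j"
  have "(n \<le> i \<or> n \<le> j) \<longrightarrow> X i j = 0" using X by (simp add: mp_mats_def)
  then show ?thesis using p by auto
qed

lemma triple:
  assumes "X \<in> mp_mats n" "Y \<in> mp_mats n" "Z \<in> mp_mats n"
    "mp_mult n X (mp_mult n Y Z) = mp_zero" "0 < X a b" "0 < Y b c" "0 < Z c d"
  shows False
proof -
  have b1: "a < n \<and> b < n" using mats_pos_bound[OF assms(1) assms(5)] .
  have b2: "c < n \<and> d < n" using mats_pos_bound[OF assms(3) assms(7)] .
  have b: "a < n" "b < n" "c < n" "d < n" using b1 b2 by auto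
  have "0 < mp_mult n Y Z b d"
    using mp_mult_pos[of Y Z b n d] assms(2,3,6,7) b mats_nonneg by blast
  then have "0 < mp_mult n X (mp_mult n Y Z) a d"
    using mp_mult_pos[of X "mp_mult n Y Z" a n d] assms(1,5) b mats_nonneg mp_mult_nonneg by blast
  then show False using assms(4) by (simp add: mp_zero_def)
qed

lemma mp_pow_nonneg: "0 \<le> mp_pow n A k i j"
  by (cases k) (auto simp: mp_one_def mp_mult_nonneg)

lemma mp_mult_zero: "mp_mult n A mp_zero = mp_zero"
  unfolding mp_mult_def mp_zero_def by (intro ext) (auto simp: image_constant_conv)

lemma mp_pow_zero_add: "mp_pow n A K = mp_zero \<Longrightarrow> mp_pow n A (t + K) = mp_zero"
  by (induction t) (auto simp: mp_mult_zero)

lemma relpow_pos: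
  assumes "A \<in> mp_mats n"
  shows "(i,j) \<in> {(i,j). 0 < A i j} ^^ k \<Longrightarrow> i < n \<Longrightarrow> j < n \<Longrightarrow> 0 < mp_pow n A k i j"
proof (induction k arbitrary: i)
  case 0
  then show ?case by (simp add: mp_one_def)
next
  case (Suc k)
  from relpow_Suc_D2[OF Suc.prems(1)] obtain m where m: "0 < A i m" "(m,j) \<in> {(i,j). 0 < A i j} ^^ k"
    by auto
  have "m < n" using m(1) assms mats_pos_bound by blast
  then have "0 < mp_pow n A k m j" using Suc m by blast
  then show ?case using mp_mult_pos[of A "mp_pow n A k" i n j] Suc.prems \<open>m<n\<close> m assms
      mats_nonneg mp_pow_nonneg by auto
qed

lemma nil_acyc:
  assumes "A \<in> mp_mats n" "mp_nilpotent n A"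
  shows "(i,i) \<notin> {(i,j). 0 < A i j}\<^sup>+"
proof
  let ?R = "{(i,j). 0 < A i j}"
  assume "(i,i) \<in> ?R\<^sup>+"
  then obtain m where m: "m > 0" "(i,i) \<in> ?R ^^ m" using trancl_power by blast
  obtain z where "(i,z) \<in> ?R" using tranclD[OF \<open>(i,i) \<in> ?R\<^sup>+\<close>] by blast
  then have "0 < A i z" by simp
  then have "i < n" using mats_pos_bound[OF assms(1)] by blast
  have mt: "(i,i) \<in> ?R ^^ (m*t)" for t
  proof (induction t)
    case 0 then show ?case by simp
  next
    case (Suc t)
    have "?R ^^ (m * Suc t) = ?R ^^ m O ?R ^^ (m*t)" by (simp add: relpow_add[symmetric])
    then show ?case using Suc m by auto
  qed
  obtain K where K: "mp_pow n A K = mp_zero" using assms(2) mp_nilpotent_def by blast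
  have "K + 1 \<le> m * (K+1)" using mult_le_mono1[of 1 m "K+1"] m(1) by simp
  then have "m * (K+1) = (m*(K+1) - K) + K" by simp
  then have "mp_pow n A (m*(K+1)) = mp_zero" using mp_pow_zero_add[OF K] by metis
  moreover have "0 < mp_pow n A (m*(K+1)) i i" using relpow_pos[OF assms(1) mt \<open>i<n\<close> \<open>i<n\<close>] .
  ultimately show False by (simp add: mp_zero_def)
qed

lemma Lgen:
  assumes H: "\<And>p y z t. (p,y) \<in> X \<union> Y \<Longrightarrow> (y,z) \<in> X \<Longrightarrow> (z,t) \<in> Y \<Longrightarrow> False"
    and "(p,y) \<in> X \<union> Y" "(y,z) \<in> X\<^sup>+" "(z,t) \<in> Y"
  shows False
proof -
  obtain c where c: "(y,c) \<in> X\<^sup>*" "(c,z) \<in> X" using tranclD2[OF assms(3)] by blast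
  show False
  proof (cases "y = c")
    case True
    then have "(y,z) \<in> X" using c(2) by simp
    then show ?thesis using H[OF assms(2) _ assms(4)] by simp
  next
    case False
    then have "(y,c) \<in> X\<^sup>+" using c(1) rtranclD by metis
    then obtain d where "(d,c) \<in> X" using tranclD2 by metis
    then have "(d,c) \<in> X \<union> Y" by simp
    then show ?thesis using H[OF _ c(2) assms(4)] by simp
  qed
qed

lemma topo:
  "finite S \<Longrightarrow> acyclic R \<Longrightarrow> R \<subseteq> S \<times> S \<Longrightarrow>
    \<exists>r. inj_on r S \<and> r ` S \<subseteq> {..<card S} \<and> (\<forall>u v. (u,v) \<in> R \<longrightarrow> r u < r v)"
proof (induction "card S" arbitrary: S R)
  case 0
  then have "S = {}" "R = {}" by auto
  then show ?case by auto
next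
  case (Suc k)
  then have "S \<noteq> {}" by auto
  then obtain x where "x \<in> S" by auto
  have "finite R" using Suc.prems by (meson finite_SigmaI finite_subset)
  then have "wf R" using Suc.prems finite_acyclic_wf by blast
  obtain m where m: "m \<in> S" "\<And>y. (y,m) \<in> R \<Longrightarrow> y \<notin> S"
    using wfE_min[OF \<open>wf R\<close> \<open>x \<in> S\<close>] by blast
  define S' where "S' = S - {m}"
  define R' where "R' = R \<inter> (S' \<times> S')"
  have "k = card S'" using Suc.hyps(2) m(1) S'_def Suc.prems(1) by simp
  moreover have "finite S'" using Suc.prems S'_def by simp
  moreover have "acyclic R'" using Suc.prems R'_def acyclic_subset by blast
  moreover have "R' \<subseteq> S' \<times> S'" using R'_def by blast
  ultimately obtain r' where r': "inj_on r' S'" "r' ` S' \<subseteq> {..<k}" "\<forall>u v. (u,v) \<in> R' \<longrightarrow> r' u < r' v"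
    using Suc.hyps(1) by blast
  define r where "r u = (if u = m then 0 else Suc (r' u))" for u
  have "inj_on r S"
  proof (rule inj_onI)
    fix u v assume uv: "u \<in> S" "v \<in> S" "r u = r v"
    show "u = v"
    proof (cases "u = m")
      case True then show ?thesis using uv(3) by (cases "v = m") (auto simp: r_def)
    next
      case False
      show ?thesis
      proof (cases "v = m")
        case True then show ?thesis using False uv(3) by (simp add: r_def)
      next
        case F2: False
        then have "r' u = r' v" using False uv(3) by (simp add: r_def)
        moreover have "u \<in> S'" "v \<in> S'" using uv False F2 S'_def by auto
        ultimately show ?thesis using r'(1) by (meson inj_onD)
      qed
    qed
  qed
  moreover have "r ` S \<subseteq> {..<card S}"
  proof
    fix y assume "y \<in> r ` S"
    then obtain u where u: "u \<in> S" "y = r u" by blast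
    show "y \<in> {..<card S}"
    proof (cases "u = m")
      case True then show ?thesis using u Suc.hyps(2)[symmetric] by (simp add: r_def)
    next
      case False
      then have "u \<in> S'" using u S'_def by blast
      then have "r' u < k" using r'(2) by blast
      then show ?thesis using u False Suc.hyps(2)[symmetric] by (simp add: r_def)
    qed
  qed
  moreover have "\<forall>u v. (u,v) \<in> R \<longrightarrow> r u < r v"
  proof (intro allI impI)
    fix u v assume uv: "(u,v) \<in> R"
    then have "u \<in> S" "v \<in> S" using Suc.prems by auto
    then have "v \<noteq> m" using m uv by blast
    show "r u < r v"
    proof (cases "u = m")
      case True then show ?thesis using \<open>v \<noteq> m\<close> by (simp add: r_def)
    next
      case False
      then have "(u,v) \<in> R'" using uv \<open>u\<in>S\<close> \<open>v\<in>S\<close> \<open>v\<noteq>m\<close> R'_def S'_def by auto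
      then show ?thesis using r'(3) False \<open>v \<noteq> m\<close> by (simp add: r_def)
    qed
  qed
  ultimately show ?case by blast
qed

lemma trancl_first: "(x,y) \<in> X\<^sup>+ \<Longrightarrow> (x,y) \<in> X \<or> (\<exists>c. (x,c) \<in> X \<and> (c,y) \<in> X\<^sup>+)"
  by (induction rule: converse_trancl_induct) auto

definition pm :: "nat \<Rightarrow> (nat \<Rightarrow> nat) \<Rightarrow> nat \<Rightarrow> nat \<Rightarrow> real" where
  "pm n f = (\<lambda>u k. if u < n \<and> k < n \<and> f u = k then 1 else 0)"

lemma pm_left:
  assumes "\<forall>u<n. f u < n" "\<forall>i j. 0 \<le> M i j" "i < n" "j < n"
  shows "mp_mult n (pm n f) M i j = M (f i) j"
proof -
  have "Max (insert 0 ((\<lambda>k. pm n f i k * M k j) ` {..<n})) = M (f i) j"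
  proof (rule Max_eqI)
    show "finite (insert 0 ((\<lambda>k. pm n f i k * M k j) ` {..<n}))" by simp
    show "y \<le> M (f i) j" if "y \<in> insert 0 ((\<lambda>k. pm n f i k * M k j) ` {..<n})" for y
    proof -
      have nn: "0 \<le> M (f i) j" using assms(2) by blast
      from that consider "y = 0" | k where "y = pm n f i k * M k j" by blast
      then show ?thesis
      proof cases
        case 1 then show ?thesis using nn by simp
      next
        case 2 then show ?thesis using nn by (cases "f i = k") (simp_all add: pm_def)
      qed
    qed
    show "M (f i) j \<in> insert 0 ((\<lambda>k. pm n f i k * M k j) ` {..<n})"
    proof (rule insertI2, rule image_eqI[where x="f i"])
      show "M (f i) j = pm n f i (f i) * M (f i) j" using assms by (simp add: pm_def)
      show "f i \<in> {..<n}" using assms by simp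
    qed
  qed
  then show ?thesis using assms by (simp add: mp_mult_def)
qed

lemma pm_right:
  assumes "h j < n" "\<forall>k<n. g k = j \<longleftrightarrow> k = h j" "\<forall>i j. 0 \<le> M i j" "i < n" "j < n"
  shows "mp_mult n M (pm n g) i j = M i (h j)"
proof -
  have "Max (insert 0 ((\<lambda>k. M i k * pm n g k j) ` {..<n})) = M i (h j)"
  proof (rule Max_eqI)
    show "finite (insert 0 ((\<lambda>k. M i k * pm n g k j) ` {..<n}))" by simp
    show "y \<le> M i (h j)" if "y \<in> insert 0 ((\<lambda>k. M i k * pm n g k j) ` {..<n})" for y
    proof -
      have nn: "0 \<le> M i (h j)" using assms(3) by blast
      from that consider "y = 0" | k where "k < n" "y = M i k * pm n g k j" by blast
      then show ?thesis
      proof cases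
        case 1 then show ?thesis using nn by simp
      next
        case 2
        show ?thesis
        proof (cases "g k = j")
          case True then have "k = h j" using assms(2) 2 by blast
          then show ?thesis using 2 nn by (simp add: pm_def)
        next
          case False then show ?thesis using 2 nn by (simp add: pm_def)
        qed
      qed
    qed
    show "M i (h j) \<in> insert 0 ((\<lambda>k. M i k * pm n g k j) ` {..<n})"
    proof (rule insertI2, rule image_eqI[where x="h j"])
      show "M i (h j) = M i (h j) * pm n g (h j) j" using assms by (simp add: pm_def)
      show "h j \<in> {..<n}" using assms by simp
    qed
  qed
  then show ?thesis using assms by (simp add: mp_mult_def)
qed

theorem corollary3p10:
  fixes n :: nat and A B :: "nat \<Rightarrow> nat \<Rightarrow> real"
  assumes "A \<in> mp_mats n" and "B \<in> mp_mats n"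
    and "mp_nilpotent n A" and "mp_nilpotent n B"
    and "mp_mult n A (mp_mult n A B) = mp_zero"
    and "mp_mult n A (mp_mult n B A) = mp_zero"
    and "mp_mult n B (mp_mult n A B) = mp_zero"
    and "mp_mult n B (mp_mult n B A) = mp_zero"
  shows "mp_simul_triangularizable n A B"
proof -
  define RA where "RA = {(i,j). 0 < A i j}"
  define RB where "RB = {(i,j). 0 < B i j}"
  define R where "R = RA \<union> RB"
  have RAR: "(a,b) \<in> R" if "(a,b) \<in> RA" for a b using that R_def by simp
  have RBR: "(a,b) \<in> R" if "(a,b) \<in> RB" for a b using that R_def by simp
  have HAB: False if "(p,y) \<in> RA \<union> RB" "(y,z) \<in> RA" "(z,t) \<in> RB" for p y z t
  proof -
    have yz: "0 < A y z" "0 < B z t" using that(2,3) RA_def RB_def by auto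
    from that(1) show False unfolding Un_iff
    proof
      assume "(p,y) \<in> RA" then have "0 < A p y" by (simp add: RA_def)
      then show False using triple[OF assms(1) assms(1) assms(2) assms(5) _ yz(1) yz(2)] by blast
    next
      assume "(p,y) \<in> RB" then have "0 < B p y" by (simp add: RB_def)
      then show False using triple[OF assms(2) assms(1) assms(2) assms(7) _ yz(1) yz(2)] by blast
    qed
  qed
  have HBA: False if "(p,y) \<in> RB \<union> RA" "(y,z) \<in> RB" "(z,t) \<in> RA" for p y z t
  proof -
    have yz: "0 < B y z" "0 < A z t" using that(2,3) RA_def RB_def by auto
    from that(1) show False unfolding Un_iff
    proof
      assume "(p,y) \<in> RB" then have "0 < B p y" by (simp add: RB_def)
      then show False using triple[OF assms(2) assms(2) assms(1) assms(8) _ yz(1) yz(2)] by blast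
    next
      assume "(p,y) \<in> RA" then have "0 < A p y" by (simp add: RA_def)
      then show False using triple[OF assms(1) assms(2) assms(1) assms(6) _ yz(1) yz(2)] by blast
    qed
  qed
  have L: False if "(p,y) \<in> R" "(y,z) \<in> RB\<^sup>+" "(z,t) \<in> RA" for p y z t
  proof -
    have py: "(p,y) \<in> RB \<union> RA" using that(1) R_def by auto
    show False by (rule Lgen[of RB RA p y z t]) (use HBA py that in blast)+
  qed
  have L': False if "(p,y) \<in> R" "(y,z) \<in> RA\<^sup>+" "(z,t) \<in> RB" for p y z t
  proof -
    have py: "(p,y) \<in> RA \<union> RB" using that(1) R_def by auto
    show False by (rule Lgen[of RA RB p y z t]) (use HAB py that in blast)+
  qed
  have cls: "(x,y) \<in> RA\<^sup>+ \<or> (x,y) \<in> RB\<^sup>+ \<or> (\<exists>c. (x,c) \<in> RA \<and> (c,y) \<in> RB\<^sup>+)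
      \<or> (\<exists>c. (x,c) \<in> RB \<and> (c,y) \<in> RA\<^sup>+)" if "(x,y) \<in> R\<^sup>+" for x y
    using that
  proof (induction rule: trancl_induct)
    case (base y)
    then show ?case unfolding R_def by blast
  next
    case (step y z)
    have yz: "(y,z) \<in> RA \<or> (y,z) \<in> RB" using step.hyps(2) R_def by blast
    from step.IH show ?case
    proof (elim disjE exE conjE)
      assume xy: "(x,y) \<in> RA\<^sup>+"
      show ?case
      proof (cases "(y,z) \<in> RA")
        case True then show ?thesis using xy by (meson trancl_into_trancl)
      next
        case False
        then have "(y,z) \<in> RB" using yz by blast
        from trancl_first[OF xy] show ?thesis
        proof (elim disjE exE conjE)
          assume "(x,y) \<in> RA" then show ?thesis using \<open>(y,z) \<in> RB\<close> by blast
        next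
          fix c assume "(x,c) \<in> RA" "(c,y) \<in> RA\<^sup>+"
          then show ?thesis using L'[of x c y z] \<open>(y,z) \<in> RB\<close> RAR RBR by blast
        qed
      qed
    next
      assume xy: "(x,y) \<in> RB\<^sup>+"
      show ?case
      proof (cases "(y,z) \<in> RB")
        case True then show ?thesis using xy by (meson trancl_into_trancl)
      next
        case False
        then have "(y,z) \<in> RA" using yz by blast
        from trancl_first[OF xy] show ?thesis
        proof (elim disjE exE conjE)
          assume "(x,y) \<in> RB" then show ?thesis using \<open>(y,z) \<in> RA\<close> by blast
        next
          fix c assume "(x,c) \<in> RB" "(c,y) \<in> RB\<^sup>+"
          then show ?thesis using L[of x c y z] \<open>(y,z) \<in> RA\<close> RAR RBR by blast
        qed
      qed
    next
      fix c assume xc: "(x,c) \<in> RA" and cy: "(c,y) \<in> RB\<^sup>+"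
      show ?case
      proof (cases "(y,z) \<in> RB")
        case True then show ?thesis using xc cy by (meson trancl_into_trancl)
      next
        case False
        then have "(y,z) \<in> RA" using yz by blast
        then show ?thesis using L[of x c y z] xc cy RAR RBR by blast
      qed
    next
      fix c assume xc: "(x,c) \<in> RB" and cy: "(c,y) \<in> RA\<^sup>+"
      show ?case
      proof (cases "(y,z) \<in> RA")
        case True then show ?thesis using xc cy by (meson trancl_into_trancl)
      next
        case False
        then have "(y,z) \<in> RB" using yz by blast
        then show ?thesis using L'[of x c y z] xc cy RAR RBR by blast
      qed
    qed
  qed
  have "acyclic R"
    unfolding acyclic_def
  proof (intro allI notI)
    fix i assume ii: "(i,i) \<in> R\<^sup>+"
    from cls[OF ii] show False
    proof (elim disjE exE conjE)
      assume "(i,i) \<in> RA\<^sup>+" then show False using nil_acyc[OF assms(1) assms(3)] RA_def by blast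
    next
      assume "(i,i) \<in> RB\<^sup>+" then show False using nil_acyc[OF assms(2) assms(4)] RB_def by blast
    next
      fix c assume "(i,c) \<in> RA" "(c,i) \<in> RB\<^sup>+" then show False using L[of i c i c] RAR RBR by blast
    next
      fix c assume "(i,c) \<in> RB" "(c,i) \<in> RA\<^sup>+" then show False using L'[of i c i c] RAR RBR by blast
    qed
  qed
  moreover have "R \<subseteq> {..<n} \<times> {..<n}"
    using mats_pos_bound[OF assms(1)] mats_pos_bound[OF assms(2)] unfolding R_def RA_def RB_def by auto
  ultimately obtain r where r: "inj_on r {..<n}" "r ` {..<n} \<subseteq> {..<n}" "\<forall>u v. (u,v) \<in> R \<longrightarrow> r u < r v"
    using topo[of "{..<n}" R] by auto
  have surj: "r ` {..<n} = {..<n}"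
    using r(1,2) by (simp add: card_image card_subset_eq)
  define s where "s = inv_into {..<n} r"
  have s1: "s j < n" "r (s j) = j" if "j < n" for j
  proof -
    have "j \<in> r ` {..<n}" using that surj by simp
    then show "s j < n" "r (s j) = j" unfolding s_def
      using inv_into_into[of j r "{..<n}"] f_inv_into_f[of j r "{..<n}"] by auto
  qed
  have s2: "s (r u) = u" if "u < n" for u
    using that r(1) unfolding s_def by (simp add: inv_into_f_f)
  have rn: "\<forall>u<n. r u < n" using r(2) by auto
  have sn: "\<forall>u<n. s u < n" using s1 by auto
  define P where "P = pm n r"
  define Q where "Q = pm n s"
  have Pm: "P \<in> mp_mats n" unfolding P_def pm_def mp_mats_def by auto
  have Qm: "Q \<in> mp_mats n" unfolding Q_def pm_def mp_mats_def by auto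
  have PQ: "mp_mult n P Q = mp_one n"
  proof (intro ext)
    fix i j
    show "mp_mult n P Q i j = mp_one n i j"
    proof (cases "i < n \<and> j < n")
      case True
      then have "mp_mult n P Q i j = Q (r i) j"
        using pm_left[OF rn, of Q i j] Qm mats_nonneg P_def by auto
      also have "\<dots> = mp_one n i j" using True s2 rn by (auto simp: Q_def pm_def mp_one_def)
      finally show ?thesis .
    next
      case False then show ?thesis by (auto simp: mp_mult_def mp_one_def)
    qed
  qed
  have QP: "mp_mult n Q P = mp_one n"
  proof (intro ext)
    fix i j
    show "mp_mult n Q P i j = mp_one n i j"
    proof (cases "i < n \<and> j < n")
      case True
      then have "mp_mult n Q P i j = P (s i) j"
        using pm_left[OF sn, of P i j] Pm mats_nonneg Q_def by auto
      also have "\<dots> = mp_one n i j" using True s1 sn by (auto simp: P_def pm_def mp_one_def)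
      finally show ?thesis .
    next
      case False then show ?thesis by (auto simp: mp_mult_def mp_one_def)
    qed
  qed
  have tri: "upper_triangular (mp_mult n Q (mp_mult n X P))"
    if X: "X \<in> mp_mats n" "\<And>u v. 0 < X u v \<Longrightarrow> r u < r v" for X
    unfolding upper_triangular_def
  proof (intro allI impI)
    fix i j :: nat assume ji: "j < i"
    show "mp_mult n Q (mp_mult n X P) i j = 0"
    proof (cases "i < n")
      case False then show ?thesis by (simp add: mp_mult_def)
    next
      case True
      then have jn: "j < n" using ji by simp
      have "mp_mult n Q (mp_mult n X P) i j = mp_mult n X P (s i) j"
        using pm_left[OF sn, of "mp_mult n X P" i j] True jn mp_mult_nonneg Q_def by auto
      also have "\<dots> = X (s i) (s j)"
        using pm_right[of s j n r X "s i"] s1 s2 True jn X(1) mats_nonneg P_def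
        by (metis (no_types, lifting))
      finally have e: "mp_mult n Q (mp_mult n X P) i j = X (s i) (s j)" .
      have "\<not> 0 < X (s i) (s j)"
      proof
        assume "0 < X (s i) (s j)"
        then have "r (s i) < r (s j)" using X(2) by blast
        then show False using s1 True jn ji by simp
      qed
      then show ?thesis using e mats_nonneg[OF X(1), of "s i" "s j"] by linarith
    qed
  qed
  have "upper_triangular (mp_mult n Q (mp_mult n A P))"
    using tri[OF assms(1)] r(3) unfolding R_def RA_def by blast
  moreover have "upper_triangular (mp_mult n Q (mp_mult n B P))"
    using tri[OF assms(2)] r(3) unfolding R_def RB_def by blast
  moreover have "mp_inverse n P Q" using Pm Qm PQ QP by (simp add: mp_inverse_def)
  ultimately show ?thesis unfolding mp_simul_triangularizable_def by blast
qed

end
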